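(* Let $f$ be a function on $\mathbb R$ whose Fourier transform vanishes for negative arguments and which is normalised ($\int_0^\infty\frac{dp}{2p}|\tilde f(p)|^2=1$), such that $f$ and $f'$ exist and are integrable, and suppose there are constants $C>0$, $L>1$, $\alpha>1/2$, $\varepsilon>0$ with \[ |f(y)|\le\frac{C}{(-y)^{1+\varepsilon}}\ (y\le -L),\qquad |f(y)|\le \frac{C}{y^{1+\alpha}}\ (y\ge L).\] Then $\bar N[f]<\infty$, and if moreover $\varepsilon>1/2$, then $\bar N^{Th}_{2\pi}[f]<\infty$.
   Context: Fourier transforms are $\tilde g(p)=(2\pi)^{-1/2}\int g(y)e^{-ipy}dy$. With $x(y)=-\log(1+e^{-y})$, $\widetilde{\check f}(-k)=(2\pi)^{-1/2}\int_{\mathbb R} f(y)e^{ikx(y)}dy$ for $k\ge0$. Mean number of created particles: $\bar N[f]=\int_0^\infty\frac{dk}{2k}|\widetilde{\check f}(-k)|^2$. Thermal average: $\bar N^{Th}_\beta[f]=\int_0^\infty\frac{dp}{2p}\frac{|\tilde f(p)|^2}{e^{\beta p}-1}$. *)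

theory Defs
  imports "HOL-Analysis.Analysis"
begin

definition fourier :: "(real \<Rightarrow> complex) \<Rightarrow> real \<Rightarrow> complex" where
  "fourier g p = complex_of_real (1 / sqrt (2 * pi)) *
     integral\<^sup>L lborel (\<lambda>y. g y * cis (- p * y))"

definition xmap :: "real \<Rightarrow> real" where
  "xmap y = - ln (1 + exp (- y))"

text \<open>(check f)~(-k) = (2 pi)^(-1/2) \<integral> f(y) e^(i k x(y)) dy.\<close>
definition check_fourier_neg :: "(real \<Rightarrow> complex) \<Rightarrow> real \<Rightarrow> complex" where
  "check_fourier_neg f k = complex_of_real (1 / sqrt (2 * pi)) *
     integral\<^sup>L lborel (\<lambda>y. f y * cis (k * xmap y))"

definition Nbar :: "(real \<Rightarrow> complex) \<Rightarrow> ennreal" where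
  "Nbar f = (\<integral>\<^sup>+ k \<in> {0<..}. ennreal (cmod (check_fourier_neg f k) ^ 2 / (2 * k)) \<partial>lborel)"

definition Nbar_th :: "real \<Rightarrow> (real \<Rightarrow> complex) \<Rightarrow> ennreal" where
  "Nbar_th \<beta> f = (\<integral>\<^sup>+ p \<in> {0<..}.
      ennreal (cmod (fourier f p) ^ 2 / (2 * p) / (exp (\<beta> * p) - 1)) \<partial>lborel)"

end

theory Submission
  imports Defs
begin


lemma cis_minus_1_le: "cmod (cis t - 1) \<le> \<bar>t\<bar>"
proof -
  have "(cmod (cis t - 1))^2 = (cos t - 1)^2 + (sin t)^2"
    by (simp add: cmod_power2 cis.code)
  also have "\<dots> = 2 - 2 * cos t" by (simp add: power2_eq_square algebra_simps)
  also have "\<dots> = 4 * (sin (t/2))^2" using cos_double_sin[of "t/2"] by simp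
  also have "\<dots> \<le> 4 * (t/2)^2"
    using abs_le_square_iff[of "sin (t/2)" "t/2"] abs_sin_x_le_abs_x[of "t/2"] by (intro mult_left_mono) auto
  also have "\<dots> = \<bar>t\<bar>^2" by (simp add: power2_eq_square)
  finally show ?thesis using abs_le_square_iff[of "cmod (cis t - 1)" t] by simp
qed

lemma cis_minus_1_powr:
  assumes "0 \<le> g" "g \<le> 1"
  shows "cmod (cis t - 1) \<le> 2 * \<bar>t\<bar> powr g"
proof (cases "\<bar>t\<bar> \<le> 1")
  case True
  have "\<bar>t\<bar> \<le> \<bar>t\<bar> powr g"
  proof (cases "t = 0")
    case False
    then have "\<bar>t\<bar> powr 1 \<le> \<bar>t\<bar> powr g" using True assms
      by (intro powr_mono') auto
    then show ?thesis using False by simp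
  qed simp
  moreover have "0 \<le> \<bar>t\<bar> powr g" by simp
  ultimately show ?thesis using cis_minus_1_le[of t] by linarith
next
  case False
  have "cmod (cis t - 1) \<le> 2" using norm_triangle_ineq4[of "cis t" 1] by simp
  moreover have "1 \<le> \<bar>t\<bar> powr g" using False assms
    by (metis ge_one_powr_ge_zero linorder_not_le order_less_imp_le)
  ultimately show ?thesis by linarith
qed




lemma powr_tail_has_integral:
  fixes s L :: real assumes "s < -1" "L > 0"
  shows "((\<lambda>y. indicator {L..} y * y powr s) has_integral - (L powr (s+1)) / (s+1)) UNIV"
proof -
  have "((\<lambda>y. y powr s) has_integral - (L powr (s+1)) / (s+1)) {L..}"
    using has_integral_powr_to_inf[OF assms] .
  then show ?thesis
  proof -
    have "(\<lambda>y. indicator {L..} y * y powr s) = (\<lambda>y. if y \<in> {L..} then y powr s else 0)"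
      by (auto simp: indicator_def fun_eq_iff)
    then show ?thesis using \<open>((\<lambda>y. y powr s) has_integral _) {L..}\<close> 
      by (simp only: has_integral_restrict_UNIV)
  qed
qed

lemma powr_tail_nn:
  fixes s L :: real assumes "s < -1" "L > 0"
  shows "(\<integral>\<^sup>+y. ennreal (indicator {L..} y * y powr s) \<partial>lborel) = ennreal (- (L powr (s+1)) / (s+1))"
  using nn_integral_has_integral_lborel[OF _ _ powr_tail_has_integral[OF assms]]
  by (auto simp: indicator_def)

lemma powr_tail_integrable:
  fixes s L :: real assumes "s < -1" "L > 0"
  shows "integrable lborel (\<lambda>y. indicator {L..} y * y powr s)"
  using powr_tail_nn[OF assms]
  by (intro integrableI_nonneg) (auto simp: indicator_def)

lemma weight_right:
  fixes h :: "real \<Rightarrow> complex" and C L \<beta> \<gamma> :: real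
  assumes h: "integrable lborel h" and L: "L \<ge> 1"
    and dec: "\<And>y. y \<ge> L \<Longrightarrow> cmod (h y) \<le> C / y powr (1 + \<beta>)"
    and g: "0 \<le> \<gamma>" "\<gamma> < \<beta>"
  shows "integrable lborel (\<lambda>y. indicator {0..} y * (cmod (h y) * (1+y) powr \<gamma>))"
proof (rule Bochner_Integration.integrable_bound)
  have [measurable]: "h \<in> borel_measurable borel" using h by auto
  show "integrable lborel (\<lambda>y. (1+L) powr \<gamma> * cmod (h y) + \<bar>C\<bar> * 2 powr \<gamma> * (indicator {L..} y * y powr (\<gamma> - 1 - \<beta>)))"
    using h powr_tail_integrable[of "\<gamma> - 1 - \<beta>" L] g L
    by (intro Bochner_Integration.integrable_add integrable_mult_right integrable_norm) auto
  show "(\<lambda>y. indicator {0..} y * (cmod (h y) * (1+y) powr \<gamma>)) \<in> borel_measurable lborel"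
    by measurable
  show "AE y in lborel. norm (indicator {0..} y * (cmod (h y) * (1 + y) powr \<gamma>))
      \<le> norm ((1+L) powr \<gamma> * cmod (h y) + \<bar>C\<bar> * 2 powr \<gamma> * (indicator {L..} y * y powr (\<gamma> - 1 - \<beta>)))"
  proof (rule AE_I2)
    fix y :: real
    have nn: "0 \<le> (1+L) powr \<gamma> * cmod (h y) + \<bar>C\<bar> * 2 powr \<gamma> * (indicator {L..} y * y powr (\<gamma> - 1 - \<beta>))"
      by (auto simp: indicator_def)
    consider "y < 0" | "0 \<le> y" "y < L" | "L \<le> y" by linarith
    then show "norm (indicator {0..} y * (cmod (h y) * (1 + y) powr \<gamma>))
      \<le> norm ((1+L) powr \<gamma> * cmod (h y) + \<bar>C\<bar> * 2 powr \<gamma> * (indicator {L..} y * y powr (\<gamma> - 1 - \<beta>)))"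
    proof cases
      case 1 then show ?thesis using nn by (simp add: indicator_def)
    next
      case 2
      have "(1+y) powr \<gamma> \<le> (1+L) powr \<gamma>" using 2 g by (intro powr_mono2) auto
      then have "cmod (h y) * (1+y) powr \<gamma> \<le> (1+L) powr \<gamma> * cmod (h y)"
        by (simp add: mult.commute mult_left_mono)
      then show ?thesis using 2 nn by (simp add: indicator_def)
    next
      case 3
      have y0: "y > 0" using 3 L by linarith
      have "cmod (h y) * (1+y) powr \<gamma> \<le> (C / y powr (1+\<beta>)) * (2*y) powr \<gamma>"
      proof -
        have "0 \<le> C / y powr (1+\<beta>)" using dec[OF 3] norm_ge_zero order_trans by blast
        moreover have "1 \<le> y" using 3 L by linarith
        ultimately show ?thesis using dec[OF 3] y0 g by (intro mult_mono powr_mono2) auto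
      qed
      also have "\<dots> = C * 2 powr \<gamma> * (y powr \<gamma> / y powr (1+\<beta>))"
        using y0 by (simp add: powr_mult)
      also have "\<dots> = C * 2 powr \<gamma> * y powr (\<gamma> - 1 - \<beta>)"
        using y0 by (simp add: powr_diff [symmetric] diff_diff_eq)
      also have "\<dots> \<le> \<bar>C\<bar> * 2 powr \<gamma> * y powr (\<gamma> - 1 - \<beta>)"
        by (intro mult_right_mono) auto
      finally have "cmod (h y) * (1+y) powr \<gamma> \<le> \<bar>C\<bar> * 2 powr \<gamma> * y powr (\<gamma> - 1 - \<beta>)" .
      moreover have "0 \<le> (1+L) powr \<gamma> * cmod (h y)" by simp
      ultimately show ?thesis using 3 y0 by (simp add: indicator_def, smt (verit) norm_ge_zero)
    qed
  qed
qed

lemma weight_left: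
  fixes h :: "real \<Rightarrow> complex" and C L \<beta> \<gamma> :: real
  assumes h: "integrable lborel h" and L: "L \<ge> 1"
    and dec: "\<And>y. y \<le> -L \<Longrightarrow> cmod (h y) \<le> C / (-y) powr (1 + \<beta>)"
    and g: "0 \<le> \<gamma>" "\<gamma> < \<beta>"
  shows "integrable lborel (\<lambda>y. indicator {..0} y * (cmod (h y) * (1-y) powr \<gamma>))"
proof -
  have h2: "integrable lborel (\<lambda>y. h (0 + (-1) * y))"
    using lborel_integrable_real_affine[OF h, of "-1" 0] by simp
  have "integrable lborel (\<lambda>y. indicator {0..} y * (cmod (h (0 + (-1)*y)) * (1+y) powr \<gamma>))"
  proof (rule weight_right[OF h2 L _ g, of C])
    fix y assume "L \<le> y" then show "cmod (h (0 + (-1)*y)) \<le> C / y powr (1 + \<beta>)"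
      using dec[of "-y"] by simp
  qed
  from lborel_integrable_real_affine[OF this, of "-1" 0]
  show ?thesis by (simp add: indicator_def)
qed




lemma xmap_abs_le: "\<bar>xmap y\<bar> \<le> 1 + \<bar>y\<bar>"
proof -
  have pos: "0 \<le> ln (1 + exp (-y))" by simp
  have "1 + exp (-y) \<le> exp 1 * exp \<bar>y\<bar>"
  proof -
    have "exp (-y) \<le> exp \<bar>y\<bar>" by simp
    moreover have "1 \<le> exp \<bar>y\<bar>" by simp
    moreover have "2 \<le> exp (1::real)" using exp_ge_add_one_self[of 1] by simp
    ultimately have "1 + exp (-y) \<le> 2 * exp \<bar>y\<bar>" by linarith
    also have "\<dots> \<le> exp 1 * exp \<bar>y\<bar>" using \<open>2 \<le> exp 1\<close> by (intro mult_right_mono) auto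
    finally show ?thesis .
  qed
  then have "ln (1 + exp (-y)) \<le> ln (exp (1 + \<bar>y\<bar>))"
    by (subst ln_le_cancel_iff) (auto simp: exp_add add_pos_pos)
  then show ?thesis using pos by (simp add: xmap_def)
qed

lemma xmap_deriv: "(xmap has_real_derivative 1 / (1 + exp y)) (at y)"
proof -
  have "(xmap has_real_derivative - (- exp (-y) / (1 + exp (-y)))) (at y)"
    unfolding xmap_def[abs_def]
    by (auto intro!: derivative_eq_intros simp: add_pos_pos)
  moreover have "- (- exp (-y) / (1 + exp (-y))) = 1 / (1 + exp y)"
    by (simp add: exp_minus field_simps add_pos_pos)
  ultimately show ?thesis by simp
qed

lemma cis_diff_eq: "cmod (cis a - cis b) = cmod (cis (a - b) - 1)"
proof -
  have "cis a - cis b = cis b * (cis (a - b) - 1)"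
    by (simp add: right_diff_distrib cis_mult)
  then show ?thesis by (simp add: norm_mult)
qed

lemma int_cis_diff_bound:
  fixes f :: "real \<Rightarrow> complex" and \<psi> \<phi> W :: "real \<Rightarrow> real"
  assumes f: "integrable lborel f" and psi[measurable]: "\<psi> \<in> borel_measurable borel"
    and phi[measurable]: "\<phi> \<in> borel_measurable borel"
    and W: "integrable lborel W"
    and Wb: "\<And>y. 2 * cmod (f y) * \<bar>\<psi> y - \<phi> y\<bar> powr \<gamma> \<le> W y"
    and g: "0 \<le> \<gamma>" "\<gamma> \<le> 1"
  shows "cmod ((LINT y|lborel. f y * cis (\<psi> y)) - (LINT y|lborel. f y * cis (\<phi> y))) \<le> (LINT y|lborel. W y)"
proof -
  have [measurable]: "f \<in> borel_measurable borel" using f by auto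
  have [measurable]: "(\<lambda>y. cis (\<psi> y)) \<in> borel_measurable borel"
    by (intro borel_measurable_continuous_on[OF _ psi] continuous_intros)
  have [measurable]: "(\<lambda>y. cis (\<phi> y)) \<in> borel_measurable borel"
    by (intro borel_measurable_continuous_on[OF _ phi] continuous_intros)
  have fc: "integrable lborel (\<lambda>y. f y * cis (\<psi> y))"
    by (rule Bochner_Integration.integrable_bound[OF f]) (auto simp: norm_mult)
  have fc2: "integrable lborel (\<lambda>y. f y * cis (\<phi> y))"
    by (rule Bochner_Integration.integrable_bound[OF f]) (auto simp: norm_mult)
  have "(LINT y|lborel. f y * cis (\<psi> y)) - (LINT y|lborel. f y * cis (\<phi> y)) = (LINT y|lborel. f y * cis (\<psi> y) - f y * cis (\<phi> y))"
    using fc fc2 by simp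
  also have "cmod \<dots> \<le> (LINT y|lborel. cmod (f y * cis (\<psi> y) - f y * cis (\<phi> y)))"
    by (rule integral_norm_bound)
  also have "\<dots> \<le> (LINT y|lborel. W y)"
  proof (rule integral_mono[OF _ W])
    show "integrable lborel (\<lambda>y. cmod (f y * cis (\<psi> y) - f y * cis (\<phi> y)))" using fc fc2 by auto
    fix y
    have "cmod (f y * cis (\<psi> y) - f y * cis (\<phi> y)) = cmod (f y) * cmod (cis (\<psi> y) - cis (\<phi> y))"
      by (metis norm_mult right_diff_distrib)
    also have "\<dots> = cmod (f y) * cmod (cis (\<psi> y - \<phi> y) - 1)" by (simp add: cis_diff_eq)
    also have "\<dots> \<le> cmod (f y) * (2 * \<bar>\<psi> y - \<phi> y\<bar> powr \<gamma>)"
      by (intro mult_left_mono cis_minus_1_powr g) auto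
    also have "\<dots> \<le> W y" using Wb[of y] by simp
    finally show "cmod (f y * cis (\<psi> y) - f y * cis (\<phi> y)) \<le> W y" .
  qed
  finally show ?thesis .
qed

lemma holder_continuous:
  fixes F :: "real \<Rightarrow> 'a::real_normed_vector"
  assumes "\<And>p q. norm (F p - F q) \<le> K * \<bar>p - q\<bar> powr \<gamma>" "\<gamma> > 0"
  shows "continuous_on UNIV F"
proof -
  have "isCont F p" for p
  proof -
    have "((\<lambda>q. K * \<bar>q - p\<bar> powr \<gamma>) \<longlongrightarrow> K * \<bar>p - p\<bar> powr \<gamma>) (at p)"
      using assms(2) by (intro tendsto_intros) auto
    then have lim: "((\<lambda>q. K * \<bar>q - p\<bar> powr \<gamma>) \<longlongrightarrow> 0) (at p)" using assms(2) by simp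
    have "((\<lambda>q. F q - F p) \<longlongrightarrow> 0) (at p)"
      by (rule Lim_null_comparison[OF _ lim]) (use assms(1) in auto)
    then show ?thesis unfolding isCont_def by (simp add: LIM_zero_iff)
  qed
  then show ?thesis by (simp add: continuous_on_eq_continuous_at)
qed




lemma xmap_meas[measurable]: "xmap \<in> borel_measurable borel"
  unfolding xmap_def[abs_def]
  by (intro borel_measurable_continuous_onI continuous_intros) (auto, smt (verit) exp_gt_zero)

lemma powr_0_1_has_integral:
  fixes s :: real assumes "s > -1"
  shows "(\<integral>\<^sup>+p. ennreal (indicator {0..1} p * p powr s) \<partial>lborel) = ennreal (1 / (s+1))"
proof -
  have "((\<lambda>p. p powr s) has_integral (1 powr (s+1) / (s+1))) {0..1}"
    using has_integral_powr_from_0[OF assms, of 1] by simp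
  then have "((\<lambda>p. p powr s) has_integral (1 / (s+1))) {0..1}" by simp
  moreover have "(\<lambda>y. indicator {0..1} y * y powr s) = (\<lambda>y. if y \<in> {0..1} then y powr s else 0)"
    by (auto simp: indicator_def fun_eq_iff)
  ultimately have "((\<lambda>y. indicator {0..1} y * y powr s) has_integral (1 / (s+1))) UNIV"
    by (simp only: has_integral_restrict_UNIV)
  from nn_integral_has_integral_lborel[OF _ _ this] show ?thesis
    by (auto simp: indicator_def)
qed

locale fsetting =
  fixes f :: "real \<Rightarrow> complex" and C L \<alpha> \<epsilon> :: real
  assumes int_f: "integrable lborel f"
    and L_gt: "L > 1" and alpha_pos: "\<alpha> > 0" and eps_pos: "\<epsilon> > 0"
    and decay_left: "\<And>y. y \<le> - L \<Longrightarrow> cmod (f y) \<le> C / (- y) powr (1 + \<epsilon>)"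
    and decay_right: "\<And>y. y \<ge> L \<Longrightarrow> cmod (f y) \<le> C / y powr (1 + \<alpha>)"
begin

lemma f_meas[measurable]: "f \<in> borel_measurable borel"
  using int_f by auto

definition Wf :: "real \<Rightarrow> real \<Rightarrow> real" where
  "Wf \<gamma> y = 2 * (indicator {0..} y * (cmod (f y) * (1+y) powr \<gamma>)
                 + indicator {..0} y * (cmod (f y) * (1-y) powr \<gamma>))"

lemma Wf_int:
  assumes "0 \<le> \<gamma>" "\<gamma> < \<alpha>" "\<gamma> < \<epsilon>"
  shows "integrable lborel (Wf \<gamma>)"
proof -
  have "integrable lborel (\<lambda>y. indicator {0..} y * (cmod (f y) * (1+y) powr \<gamma>))"
    using weight_right[of f L C \<alpha> \<gamma>, OF int_f _ decay_right] L_gt assms by auto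
  moreover have "integrable lborel (\<lambda>y. indicator {..0} y * (cmod (f y) * (1-y) powr \<gamma>))"
    using weight_left[of f L C \<epsilon> \<gamma>, OF int_f _ decay_left] L_gt assms by auto
  ultimately show ?thesis unfolding Wf_def[abs_def] by auto
qed

lemma Wf_nonneg: "0 \<le> Wf \<gamma> y"
  by (auto simp: Wf_def indicator_def)

lemma Wf_bound:
  assumes "0 \<le> \<gamma>" "0 \<le> s" "\<bar>t\<bar> \<le> s * (1 + \<bar>y\<bar>)"
  shows "2 * cmod (f y) * \<bar>t\<bar> powr \<gamma> \<le> s powr \<gamma> * Wf \<gamma> y"
proof -
  have "\<bar>t\<bar> powr \<gamma> \<le> (s * (1 + \<bar>y\<bar>)) powr \<gamma>"
    using assms by (intro powr_mono2) auto
  also have "\<dots> = s powr \<gamma> * (1 + \<bar>y\<bar>) powr \<gamma>"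
    using assms by (simp add: powr_mult)
  finally have 1: "2 * cmod (f y) * \<bar>t\<bar> powr \<gamma> \<le> s powr \<gamma> * (2 * (cmod (f y) * (1 + \<bar>y\<bar>) powr \<gamma>))"
    by (simp add: mult_left_mono mult_ac)
  have 2: "cmod (f y) * (1 + \<bar>y\<bar>) powr \<gamma> \<le> indicator {0..} y * (cmod (f y) * (1+y) powr \<gamma>)
                 + indicator {..0} y * (cmod (f y) * (1-y) powr \<gamma>)"
    by (cases "y \<ge> 0") (auto simp: indicator_def)
  have 3: "s powr \<gamma> * (2 * (cmod (f y) * (1 + \<bar>y\<bar>) powr \<gamma>)) \<le> s powr \<gamma> * (2 * (indicator {0..} y * (cmod (f y) * (1+y) powr \<gamma>)
                 + indicator {..0} y * (cmod (f y) * (1-y) powr \<gamma>)))"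
    using 2 by (intro mult_left_mono) auto
  show ?thesis unfolding Wf_def using 1 3 by linarith
qed

lemma fourier_diff:
  assumes "0 \<le> \<gamma>" "\<gamma> \<le> 1" "\<gamma> < \<alpha>" "\<gamma> < \<epsilon>"
  shows "cmod (fourier f p - fourier f q) \<le> 1 / sqrt (2*pi) * (LINT y|lborel. Wf \<gamma> y) * \<bar>p - q\<bar> powr \<gamma>"
proof -
  have "fourier f p - fourier f q = complex_of_real (1 / sqrt (2 * pi)) *
     ((LINT y|lborel. f y * cis (- p * y)) - (LINT y|lborel. f y * cis (- q * y)))"
    by (simp add: fourier_def right_diff_distrib)
  also have "cmod \<dots> = 1 / sqrt (2*pi) * cmod ((LINT y|lborel. f y * cis (- p * y)) - (LINT y|lborel. f y * cis (- q * y)))"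
    by (simp add: norm_mult norm_divide)
  also have "\<dots> \<le> 1 / sqrt (2*pi) * (LINT y|lborel. \<bar>p - q\<bar> powr \<gamma> * Wf \<gamma> y)"
  proof (intro mult_left_mono int_cis_diff_bound[OF int_f] )
    show "integrable lborel (\<lambda>y. \<bar>p - q\<bar> powr \<gamma> * Wf \<gamma> y)" using Wf_int assms by auto
    fix y show "2 * cmod (f y) * \<bar>- p * y - - q * y\<bar> powr \<gamma> \<le> \<bar>p - q\<bar> powr \<gamma> * Wf \<gamma> y"
    proof (intro Wf_bound)
      have "\<bar>- p * y - - q * y\<bar> = \<bar>p - q\<bar> * \<bar>y\<bar>" by (simp add: abs_mult[symmetric] algebra_simps)
      also have "\<dots> \<le> \<bar>p - q\<bar> * (1 + \<bar>y\<bar>)" by (intro mult_left_mono) auto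
      finally show "\<bar>- p * y - - q * y\<bar> \<le> \<bar>p - q\<bar> * (1 + \<bar>y\<bar>)" .
    qed (use assms in auto)
  qed (use assms in auto)
  finally show ?thesis by (simp add: mult_ac)
qed

lemma check_diff:
  assumes "0 \<le> \<gamma>" "\<gamma> \<le> 1" "\<gamma> < \<alpha>" "\<gamma> < \<epsilon>"
  shows "cmod (check_fourier_neg f k - check_fourier_neg f k') \<le> 1 / sqrt (2*pi) * (LINT y|lborel. Wf \<gamma> y) * \<bar>k - k'\<bar> powr \<gamma>"
proof -
  have "check_fourier_neg f k - check_fourier_neg f k' = complex_of_real (1 / sqrt (2 * pi)) *
     ((LINT y|lborel. f y * cis (k * xmap y)) - (LINT y|lborel. f y * cis (k' * xmap y)))"
    by (simp add: check_fourier_neg_def right_diff_distrib)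
  also have "cmod \<dots> = 1 / sqrt (2*pi) * cmod ((LINT y|lborel. f y * cis (k * xmap y)) - (LINT y|lborel. f y * cis (k' * xmap y)))"
    by (simp add: norm_mult norm_divide)
  also have "\<dots> \<le> 1 / sqrt (2*pi) * (LINT y|lborel. \<bar>k - k'\<bar> powr \<gamma> * Wf \<gamma> y)"
  proof (intro mult_left_mono int_cis_diff_bound[OF int_f] )
    show "integrable lborel (\<lambda>y. \<bar>k - k'\<bar> powr \<gamma> * Wf \<gamma> y)" using Wf_int assms by auto
    fix y show "2 * cmod (f y) * \<bar>k * xmap y - k' * xmap y\<bar> powr \<gamma> \<le> \<bar>k - k'\<bar> powr \<gamma> * Wf \<gamma> y"
    proof (intro Wf_bound)
      have "\<bar>k * xmap y - k' * xmap y\<bar> = \<bar>k - k'\<bar> * \<bar>xmap y\<bar>" by (simp add: abs_mult[symmetric] algebra_simps)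
      also have "\<dots> \<le> \<bar>k - k'\<bar> * (1 + \<bar>y\<bar>)" by (intro mult_left_mono xmap_abs_le) auto
      finally show "\<bar>k * xmap y - k' * xmap y\<bar> \<le> \<bar>k - k'\<bar> * (1 + \<bar>y\<bar>)" .
    qed (use assms in auto)
  qed (use assms in auto)
  finally show ?thesis by (simp add: mult_ac)
qed

lemma check0: "check_fourier_neg f 0 = fourier f 0"
  by (simp add: check_fourier_neg_def fourier_def)

definition g0 where "g0 = min 1 (min \<alpha> \<epsilon>) / 2"

lemma g0: "0 < g0" "g0 \<le> 1" "g0 < \<alpha>" "g0 < \<epsilon>"
  using alpha_pos eps_pos by (auto simp: g0_def)

lemma fourier_meas[measurable]: "fourier f \<in> borel_measurable borel"
  using g0 by (intro borel_measurable_continuous_onI holder_continuous[OF fourier_diff]) auto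

lemma check_meas[measurable]: "check_fourier_neg f \<in> borel_measurable borel"
  using g0 by (intro borel_measurable_continuous_onI holder_continuous[OF check_diff]) auto

lemma fourier0:
  assumes pos_freq: "\<And>p. p < 0 \<Longrightarrow> fourier f p = 0"
  shows "fourier f 0 = 0"
proof -
  define \<gamma> where "\<gamma> = g0"
  have g: "0 < \<gamma>" "\<gamma> \<le> 1" "\<gamma> < \<alpha>" "\<gamma> < \<epsilon>" using g0 by (auto simp: \<gamma>_def)
  define M where "M = 1 / sqrt (2*pi) * (LINT y|lborel. Wf \<gamma> y)"
  have le: "cmod (fourier f 0) \<le> M * \<bar>p\<bar> powr \<gamma>" if "p < 0" for p
    using fourier_diff[of \<gamma> 0 p] g pos_freq[OF that] by (simp add: M_def mult_ac)
  have "((\<lambda>p. M * \<bar>p\<bar> powr \<gamma>) \<longlongrightarrow> M * \<bar>0\<bar> powr \<gamma>) (at_left 0)"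
    using g by (intro tendsto_intros) auto
  then have lim: "((\<lambda>p. M * \<bar>p\<bar> powr \<gamma>) \<longlongrightarrow> 0) (at_left 0)" by simp
  have "cmod (fourier f 0) \<le> 0"
  proof (rule tendsto_lowerbound[OF lim])
    have "eventually (\<lambda>p. p \<in> {-1<..<0}) (at_left (0::real))"
      by (rule eventually_at_left_real) simp
    then show "\<forall>\<^sub>F p in at_left 0. cmod (fourier f 0) \<le> M * \<bar>p\<bar> powr \<gamma>"
      by eventually_elim (use le in auto)
  qed simp
  then show ?thesis by simp
qed

end



context fsetting begin

lemma fourier_small:
  assumes pos_freq: "\<And>p. p < 0 \<Longrightarrow> fourier f p = 0"
    and g: "0 \<le> \<gamma>" "\<gamma> \<le> 1" "\<gamma> < \<alpha>" "\<gamma> < \<epsilon>"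
  shows "cmod (fourier f p) \<le> 1 / sqrt (2*pi) * (LINT y|lborel. Wf \<gamma> y) * \<bar>p\<bar> powr \<gamma>"
  using fourier_diff[OF g, of p 0] fourier0[OF pos_freq] by simp

lemma check_small:
  assumes pos_freq: "\<And>p. p < 0 \<Longrightarrow> fourier f p = 0"
    and g: "0 \<le> \<gamma>" "\<gamma> \<le> 1" "\<gamma> < \<alpha>" "\<gamma> < \<epsilon>"
  shows "cmod (check_fourier_neg f k) \<le> 1 / sqrt (2*pi) * (LINT y|lborel. Wf \<gamma> y) * \<bar>k\<bar> powr \<gamma>"
  using check_diff[OF g, of k 0] check0 fourier0[OF pos_freq] by simp

lemma sq_bound:
  fixes p M \<gamma> :: real
  assumes "0 < p" "0 \<le> M" "0 \<le> z" "z \<le> M * p powr \<gamma>"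
  shows "z^2 \<le> M^2 * p powr (2*\<gamma>)"
proof -
  have "z^2 \<le> (M * p powr \<gamma>)^2" using assms by (intro power_mono) auto
  also have "\<dots> = M^2 * p powr (2*\<gamma>)"
  proof -
    have "(p powr \<gamma>)^2 = p powr (2*\<gamma>)" by (simp add: power2_eq_square powr_add[symmetric])
    then show ?thesis by (simp add: power_mult_distrib)
  qed
  finally show ?thesis .
qed

lemma div_le_self: "0 \<le> (x::real) \<Longrightarrow> 1 \<le> d \<Longrightarrow> x / d \<le> x"
proof -
  assume "0 \<le> x" "1 \<le> d"
  then have "x / d \<le> x / 1" by (intro divide_left_mono) auto
  then show ?thesis by simp
qed

lemma thermal:
  assumes pos_freq: "\<And>p. p < 0 \<Longrightarrow> fourier f p = 0"
    and normalised: "(\<integral>\<^sup>+ p \<in> {0<..}. ennreal (cmod (fourier f p) ^ 2 / (2 * p)) \<partial>lborel) = 1"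
    and a: "\<alpha> > 1/2" and e: "\<epsilon> > 1/2"
  shows "Nbar_th (2 * pi) f < \<infinity>"
proof -
  define \<gamma> where "\<gamma> = (1/2 + min 1 (min \<alpha> \<epsilon>)) / 2"
  have g: "0 \<le> \<gamma>" "\<gamma> \<le> 1" "\<gamma> < \<alpha>" "\<gamma> < \<epsilon>" "\<gamma> > 1/2" using a e by (auto simp: \<gamma>_def)
  define M where "M = 1 / sqrt (2*pi) * (LINT y|lborel. Wf \<gamma> y)"
  have M0: "0 \<le> M" unfolding M_def using Wf_nonneg by (auto intro!: integral_nonneg_AE)
  define K where "K = M^2 / (4*pi)"
  have bnd: "ennreal (cmod (fourier f p) ^ 2 / (2 * p) / (exp (2 * pi * p) - 1)) * indicator {0<..} p
     \<le> ennreal K * ennreal (indicator {0..1} p * p powr (2*\<gamma> - 2))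
       + ennreal (cmod (fourier f p) ^ 2 / (2 * p)) * indicator {0<..} p" for p
  proof (cases "p > 0")
    case False then show ?thesis by (simp add: indicator_def)
  next
    case True
    have ex: "exp (2 * pi * p) - 1 \<ge> 2 * pi * p" using exp_ge_add_one_self[of "2*pi*p"] by linarith
    have expos: "exp (2 * pi * p) - 1 > 0" using ex True by (smt (verit) pi_gt3 mult_pos_pos)
    show ?thesis
    proof (cases "p \<le> 1")
      case True2: True
      have z: "cmod (fourier f p) ^ 2 \<le> M^2 * p powr (2*\<gamma>)"
      proof -
        have fs: "cmod (fourier f p) \<le> M * p powr \<gamma>"
          using fourier_small[of \<gamma> p] pos_freq g True by (simp add: M_def)
        show ?thesis by (rule sq_bound[OF True M0 _ fs]) simp
      qed
      have "cmod (fourier f p) ^ 2 / (2 * p) / (exp (2 * pi * p) - 1)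
          \<le> M^2 * p powr (2*\<gamma>) / (2 * p) / (2 * pi * p)"
        using True expos ex z by (intro divide_mono mult_mono) auto
      also have "\<dots> = K * (p powr (2*\<gamma>) / p powr 2)"
        using True by (simp add: K_def powr_numeral field_simps power2_eq_square)
      also have "\<dots> = K * p powr (2*\<gamma> - 2)" using True by (simp add: powr_diff)
      finally have "cmod (fourier f p) ^ 2 / (2 * p) / (exp (2 * pi * p) - 1) \<le> K * p powr (2*\<gamma> - 2)" .
      then have "ennreal (cmod (fourier f p) ^ 2 / (2 * p) / (exp (2 * pi * p) - 1))
          \<le> ennreal K * ennreal (indicator {0..1} p * p powr (2*\<gamma> - 2))"
        using True True2 M0 by (simp add: ennreal_mult'[symmetric] K_def indicator_def)
      then show ?thesis using True by (simp add: indicator_def add_increasing2)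
    next
      case False
      have "exp (2 * pi * p) - 1 \<ge> 1" using ex False pi_gt3 by (smt (verit) mult_less_cancel_left2 mult_pos_pos)
      then have "cmod (fourier f p) ^ 2 / (2 * p) / (exp (2 * pi * p) - 1) \<le> cmod (fourier f p) ^ 2 / (2 * p)"
        using div_le_self[of "cmod (fourier f p) ^ 2 / (2 * p)"] True by simp
      then show ?thesis using True by (simp add: indicator_def add_increasing)
    qed
  qed
  have "Nbar_th (2 * pi) f \<le> (\<integral>\<^sup>+p. ennreal K * ennreal (indicator {0..1} p * p powr (2*\<gamma> - 2))
       + ennreal (cmod (fourier f p) ^ 2 / (2 * p)) * indicator {0<..} p \<partial>lborel)"
    unfolding Nbar_th_def by (rule nn_integral_mono) (rule bnd)
  also have "\<dots> = ennreal K * (\<integral>\<^sup>+p. ennreal (indicator {0..1} p * p powr (2*\<gamma> - 2)) \<partial>lborel)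
       + (\<integral>\<^sup>+ p \<in> {0<..}. ennreal (cmod (fourier f p) ^ 2 / (2 * p)) \<partial>lborel)"
    by (subst nn_integral_add) (auto simp: nn_integral_cmult mult.commute)
  also have "\<dots> = ennreal K * ennreal (1 / (2*\<gamma> - 2 + 1)) + 1"
    using powr_0_1_has_integral[of "2*\<gamma> - 2"] g normalised by simp
  also have "\<dots> < \<infinity>" by (simp add: ennreal_mult_less_top)
  finally show ?thesis .
qed

end



lemma cmod_1_exp [simp]: "cmod (1 + complex_of_real (exp y)) = 1 + exp y"
proof -
  have "1 + complex_of_real (exp y) = complex_of_real (1 + exp y)" by simp
  then have "cmod (1 + complex_of_real (exp y)) = \<bar>1 + exp y\<bar>" by (simp only: norm_of_real)
  then show ?thesis by (smt (verit) exp_gt_zero)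
qed

locale fsetting2 = fsetting +
  assumes diff: "\<And>y. f differentiable (at y)"
    and int_df: "integrable lborel (\<lambda>y. vector_derivative f (at y))"
begin

abbreviation "fd y \<equiv> vector_derivative f (at y)"

lemma fd: "(f has_vector_derivative fd y) (at y)"
  using diff vector_derivative_works by blast

lemma f_cont: "continuous_on S f"
  using fd by (meson continuous_at_imp_continuous_on has_vector_derivative_continuous)

lemma E_deriv:
  "((\<lambda>y. cis (k * xmap y)) has_vector_derivative (\<i> * complex_of_real (k / (1 + exp y)) * cis (k * xmap y))) (at y)"
proof -
  have 1: "((\<lambda>y. complex_of_real (k * xmap y)) has_vector_derivative complex_of_real (k * (1 / (1 + exp y)))) (at y)"
    by (intro has_vector_derivative_of_real DERIV_cmult xmap_deriv)
  have 2: "((\<lambda>z. exp (\<i> * z)) has_field_derivative \<i> * exp (\<i> * complex_of_real (k * xmap y))) (at (complex_of_real (k * xmap y)))"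
    by (auto intro!: derivative_eq_intros)
  from field_vector_diff_chain_at[OF 1 2] show ?thesis
    by (simp add: o_def cis_conv_exp mult_ac)
qed

lemma ibp:
  assumes au: "a \<le> u" and k: "k > 0"
    and bint: "(\<lambda>y. cmod (fd y) * (1 + exp y) + cmod (f y) * exp y) integrable_on {a..u}"
  shows "cmod (integral {a..u} (\<lambda>y. f y * cis (k * xmap y)))
    \<le> (cmod (f u) * (1 + exp u) + cmod (f a) * (1 + exp a)
        + integral {a..u} (\<lambda>y. cmod (fd y) * (1 + exp y) + cmod (f y) * exp y)) / k"
proof -
  define E where "E y = cis (k * xmap y)" for y
  define g where "g y = f y * complex_of_real (1 + exp y)" for y
  define G where "G y = f y * complex_of_real (exp y) + fd y * complex_of_real (1 + exp y)" for y
  have gd: "(g has_vector_derivative G y) (at y)" for y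
  proof -
    have "((\<lambda>y. complex_of_real (1 + exp y)) has_vector_derivative complex_of_real (exp y)) (at y)"
      by (auto intro!: derivative_eq_intros)
    from has_vector_derivative_mult[OF fd this] show ?thesis
      by (simp add: g_def[abs_def] G_def)
  qed
  have prod: "((\<lambda>y. g y * E y) has_vector_derivative (\<i> * complex_of_real k * (f y * E y) + G y * E y)) (at y)" for y
  proof -
    from has_vector_derivative_mult[OF gd E_deriv[of k y]]
    have "((\<lambda>y. g y * E y) has_vector_derivative
       (g y * (\<i> * complex_of_real (k / (1 + exp y)) * E y) + G y * E y)) (at y)"
      by (simp add: E_def)
    moreover have "g y * (\<i> * complex_of_real (k / (1 + exp y)) * E y) = \<i> * complex_of_real k * (f y * E y)"
    proof -
      have "1 + exp y \<noteq> 0" by (smt (verit) exp_gt_zero)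
      then have "complex_of_real (1 + exp y) \<noteq> 0" by (metis of_real_eq_0_iff)
      then show ?thesis by (simp add: g_def field_simps)
    qed
    ultimately show ?thesis by simp
  qed
  have ftc: "((\<lambda>y. \<i> * complex_of_real k * (f y * E y) + G y * E y) has_integral (g u * E u - g a * E a)) {a..u}"
    by (rule fundamental_theorem_of_calculus[OF au]) (auto intro: has_vector_derivative_at_within prod)
  have fE: "(\<lambda>y. f y * E y) integrable_on {a..u}"
    unfolding E_def
    by (intro integrable_continuous_interval continuous_intros f_cont continuous_on_compose2[OF _ continuous_on_cis]) 
       (auto intro: continuous_at_imp_continuous_on DERIV_isCont xmap_deriv)
  have fE2: "((\<lambda>y. \<i> * complex_of_real k * (f y * E y)) has_integral (\<i> * complex_of_real k * integral {a..u} (\<lambda>y. f y * E y))) {a..u}"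
    using fE by (intro has_integral_mult_right integrable_integral)
  have GE: "((\<lambda>y. G y * E y) has_integral (g u * E u - g a * E a - \<i> * complex_of_real k * integral {a..u} (\<lambda>y. f y * E y))) {a..u}"
    using has_integral_diff[OF ftc fE2] by simp
  define I2 where "I2 = integral {a..u} (\<lambda>y. G y * E y)"
  have eq: "\<i> * complex_of_real k * integral {a..u} (\<lambda>y. f y * E y) = g u * E u - g a * E a - I2"
    using GE unfolding I2_def by (simp add: integral_unique)
  have I2b: "cmod I2 \<le> integral {a..u} (\<lambda>y. cmod (fd y) * (1 + exp y) + cmod (f y) * exp y)"
    unfolding I2_def
  proof (rule integral_norm_bound_integral[OF _ bint])
    show "(\<lambda>y. G y * E y) integrable_on {a..u}" using GE by blast
    fix y
    have "cmod (G y * E y) = cmod (G y)" by (simp add: E_def norm_mult)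
    also have "\<dots> \<le> cmod (f y * complex_of_real (exp y)) + cmod (fd y * complex_of_real (1 + exp y))"
      unfolding G_def by (rule norm_triangle_ineq)
    also have "\<dots> = cmod (fd y) * (1 + exp y) + cmod (f y) * exp y"
      by (simp add: norm_mult)
    finally show "cmod (G y * E y) \<le> cmod (fd y) * (1 + exp y) + cmod (f y) * exp y" .
  qed
  have "k * cmod (integral {a..u} (\<lambda>y. f y * E y)) = cmod (\<i> * complex_of_real k * integral {a..u} (\<lambda>y. f y * E y))"
    using k by (simp add: norm_mult)
  also have "\<dots> \<le> cmod (g u * E u) + cmod (g a * E a) + cmod I2"
  proof -
    have t: "cmod (x - y - z) \<le> cmod x + cmod y + cmod z" for x y z :: complex
      using norm_triangle_ineq4[of "x - y" z] norm_triangle_ineq4[of x y] by linarith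
    show ?thesis unfolding eq by (rule t)
  qed
  also have "\<dots> \<le> cmod (f u) * (1 + exp u) + cmod (f a) * (1 + exp a)
        + integral {a..u} (\<lambda>y. cmod (fd y) * (1 + exp y) + cmod (f y) * exp y)"
  proof -
    have "cmod (g v * E v) = cmod (f v) * (1 + exp v)" for v
      by (simp add: g_def E_def norm_mult)
    then show ?thesis using I2b by simp
  qed
  finally have "k * cmod (integral {a..u} (\<lambda>y. f y * E y)) \<le> cmod (f u) * (1 + exp u) + cmod (f a) * (1 + exp a)
        + integral {a..u} (\<lambda>y. cmod (fd y) * (1 + exp y) + cmod (f y) * exp y)" .
  then show ?thesis using k unfolding E_def by (simp add: pos_le_divide_eq mult.commute)
qed

end



context fsetting2 begin

definition gR where "gR = (1/2 + min 1 \<alpha>) / 2"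

definition hh where "hh y = cmod (fd y) + cmod (f y)" for y

definition Hint where "Hint k = (LINT y|lborel. indicator {..ln k} y * (hh y * exp y))" for k

lemma fd_meas[measurable]: "fd \<in> borel_measurable borel"
  using int_df by auto

lemma hh_int: "integrable lborel hh"
  unfolding hh_def[abs_def] using int_df int_f by auto

lemma hh_nonneg: "0 \<le> hh y" by (simp add: hh_def)

lemma hh_meas[measurable]: "hh \<in> borel_measurable borel"
  unfolding hh_def[abs_def] by measurable

lemma Hint_int: "integrable lborel (\<lambda>y. indicator {..u} y * (hh y * exp y))"
proof (rule Bochner_Integration.integrable_bound)
  show "integrable lborel (\<lambda>y. exp u * hh y)" using hh_int by auto
  show "(\<lambda>y. indicator {..u} y * (hh y * exp y)) \<in> borel_measurable lborel" by measurable
  show "AE y in lborel. norm (indicator {..u} y * (hh y * exp y)) \<le> norm (exp u * hh y)"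
    by (rule AE_I2) (auto simp: indicator_def hh_nonneg abs_mult mult.commute[of "exp u"] intro!: mult_left_mono)
qed

lemma large_bound:
  assumes C_pos: "C > 0" and a: "\<alpha> > 1/2" and k: "k \<ge> exp L"
  shows "cmod (LINT y|lborel. f y * cis (k * xmap y))
     \<le> (LINT y|lborel. indicator {0..} y * (cmod (f y) * (1+y) powr gR)) * ln k powr (- gR)
       + 2 * C * ln k powr (- gR)
       + ((LINT y|lborel. Wf g0 y) + 2 * C + (LINT y|lborel. cmod (fd y))) * k powr (- g0)
       + Hint k / k"
proof -
  define u where "u = ln k"
  define a where "a = - k"
  define E where "E y = cis (k * xmap y)" for y
  have L1: "L > 1" using L_gt .
  have k1: "k > 1" using k exp_gt_one[of L] L1 by linarith
  have kL: "k \<ge> L" using k exp_ge_add_one_self[of L] by linarith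
  have uL: "u \<ge> L" unfolding u_def using k k1 ln_ge_iff[of k L] by linarith
  have u1: "u > 1" using uL L1 by linarith
  have eu: "exp u = k" unfolding u_def using k1 by simp
  have au: "a \<le> u" unfolding a_def using u1 k1 by linarith
  have gR: "1/2 < gR" "gR \<le> 1" "gR < \<alpha>" using a by (auto simp: gR_def)
  note g0 = g0
  have [measurable]: "E \<in> borel_measurable borel"
  proof -
    have [measurable]: "(\<lambda>y. k * xmap y) \<in> borel_measurable borel" by measurable
    have "continuous_on UNIV cis" by (intro continuous_intros)
    from borel_measurable_continuous_on[OF this, of "\<lambda>y. k * xmap y"]
    show ?thesis unfolding E_def[abs_def] by simp
  qed
  have Enorm: "cmod (E y) = 1" for y by (simp add: E_def)
  have fE: "integrable lborel (\<lambda>y. f y * E y)"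
    by (rule Bochner_Integration.integrable_bound[OF int_f]) (auto simp: norm_mult Enorm)
  have split: "f y * E y = indicator {..<a} y *\<^sub>R (f y * E y) + indicator {a..u} y *\<^sub>R (f y * E y)
      + indicator {u<..} y *\<^sub>R (f y * E y)" for y
    using au by (auto simp: indicator_def)
  have i1: "integrable lborel (\<lambda>y. indicator {..<a} y *\<^sub>R (f y * E y))"
    by (rule integrable_mult_indicator[OF _ fE]) auto
  have i2: "integrable lborel (\<lambda>y. indicator {a..u} y *\<^sub>R (f y * E y))"
    by (rule integrable_mult_indicator[OF _ fE]) auto
  have i3: "integrable lborel (\<lambda>y. indicator {u<..} y *\<^sub>R (f y * E y))"
    by (rule integrable_mult_indicator[OF _ fE]) auto
  define S1 where "S1 = (LINT y|lborel. indicator {..<a} y *\<^sub>R (f y * E y))"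
  define S2 where "S2 = (LINT y|lborel. indicator {a..u} y *\<^sub>R (f y * E y))"
  define S3 where "S3 = (LINT y|lborel. indicator {u<..} y *\<^sub>R (f y * E y))"
  have S: "(LINT y|lborel. f y * E y) = S1 + S2 + S3"
    unfolding S1_def S2_def S3_def
    by (subst split) (simp add: i1 i2 i3)
  have S1b: "cmod S1 \<le> (LINT y|lborel. Wf g0 y) * k powr (- g0)"
  proof -
    have "cmod S1 \<le> (LINT y|lborel. cmod (indicator {..<a} y *\<^sub>R (f y * E y)))"
      unfolding S1_def by (rule integral_norm_bound)
    also have "\<dots> \<le> (LINT y|lborel. k powr (- g0) * Wf g0 y)"
    proof (rule integral_mono)
      show "integrable lborel (\<lambda>y. cmod (indicator {..<a} y *\<^sub>R (f y * E y)))" by (rule integrable_norm[OF i1])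
      show "integrable lborel (\<lambda>y. k powr (- g0) * Wf g0 y)" using Wf_int g0 by auto
      fix y
      show "cmod (indicator {..<a} y *\<^sub>R (f y * E y)) \<le> k powr (- g0) * Wf g0 y"
      proof (cases "y < a")
        case False then show ?thesis using Wf_nonneg by (simp add: indicator_def)
      next
        case True
        have "k powr g0 \<le> (1 - y) powr g0" using True g0 k1 unfolding a_def by (intro powr_mono2) auto
        then have 1: "cmod (f y) * k powr g0 \<le> cmod (f y) * (1 - y) powr g0"
          by (intro mult_left_mono) auto
        have y0: "y < 0" using True k1 unfolding a_def by linarith
        have "Wf g0 y = 2 * (cmod (f y) * (1 - y) powr g0)"
          using y0 unfolding Wf_def by (simp add: indicator_def)
        moreover have "0 \<le> cmod (f y) * (1 - y) powr g0" by simp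
        ultimately have "cmod (f y) * k powr g0 \<le> Wf g0 y" using 1 by linarith
        then have "k powr (- g0) * (cmod (f y) * k powr g0) \<le> k powr (- g0) * Wf g0 y"
          by (intro mult_left_mono) auto
        moreover have "k powr (- g0) * (cmod (f y) * k powr g0) = cmod (f y)"
        proof -
          have "k powr (- g0) * k powr g0 = 1" using k1 by (simp add: powr_add[symmetric])
          then show ?thesis by (metis mult.left_commute mult_1_right)
        qed
        ultimately show ?thesis using True by (simp add: indicator_def norm_mult Enorm)
      qed
    qed
    also have "\<dots> = (LINT y|lborel. Wf g0 y) * k powr (- g0)" by simp
    finally show ?thesis .
  qed
  define MR where "MR = (LINT y|lborel. indicator {0..} y * (cmod (f y) * (1+y) powr gR))"
  have MRint: "integrable lborel (\<lambda>y. indicator {0..} y * (cmod (f y) * (1+y) powr gR))"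
    using weight_right[of f L C \<alpha> gR, OF int_f _ decay_right] L1 gR by auto
  have S3b: "cmod S3 \<le> MR * u powr (- gR)"
  proof -
    have "cmod S3 \<le> (LINT y|lborel. cmod (indicator {u<..} y *\<^sub>R (f y * E y)))"
      unfolding S3_def by (rule integral_norm_bound)
    also have "\<dots> \<le> (LINT y|lborel. u powr (- gR) * (indicator {0..} y * (cmod (f y) * (1+y) powr gR)))"
    proof (rule integral_mono)
      show "integrable lborel (\<lambda>y. cmod (indicator {u<..} y *\<^sub>R (f y * E y)))" by (rule integrable_norm[OF i3])
      show "integrable lborel (\<lambda>y. u powr (- gR) * (indicator {0..} y * (cmod (f y) * (1+y) powr gR)))"
        using MRint by auto
      fix y
      show "cmod (indicator {u<..} y *\<^sub>R (f y * E y)) \<le> u powr (- gR) * (indicator {0..} y * (cmod (f y) * (1+y) powr gR))"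
      proof (cases "y > u")
        case False then show ?thesis by (simp add: indicator_def)
      next
        case True
        have "u powr gR \<le> (1 + y) powr gR" using True gR u1 by (intro powr_mono2) auto
        then have "u powr (- gR) * (cmod (f y) * u powr gR) \<le> u powr (- gR) * (cmod (f y) * (1+y) powr gR)"
          by (intro mult_left_mono) auto
        moreover have "u powr (- gR) * (cmod (f y) * u powr gR) = cmod (f y)"
        proof -
          have "u powr (- gR) * u powr gR = 1" using u1 by (simp add: powr_add[symmetric])
          then show ?thesis by (metis mult.left_commute mult_1_right)
        qed
        ultimately show ?thesis using True u1 by (simp add: indicator_def norm_mult Enorm)
      qed
    qed
    also have "\<dots> = MR * u powr (- gR)" unfolding MR_def by simp
    finally show ?thesis .
  qed
  define b where "b y = cmod (fd y) * (1 + exp y) + cmod (f y) * exp y" for y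
  have bint: "set_integrable lborel {a..u} b"
    unfolding set_integrable_def
  proof (rule Bochner_Integration.integrable_bound)
    show "integrable lborel (\<lambda>y. (1 + exp u) * hh y)" using hh_int by auto
    show "(\<lambda>y. indicator {a..u} y *\<^sub>R b y) \<in> borel_measurable lborel" unfolding b_def[abs_def] by measurable
    show "AE y in lborel. norm (indicator {a..u} y *\<^sub>R b y) \<le> norm ((1 + exp u) * hh y)"
    proof (rule AE_I2)
      fix y
      have "indicator {a..u} y * b y \<le> (1 + exp u) * hh y"
      proof (cases "y \<in> {a..u}")
        case True
        then have "exp y \<le> exp u" by simp
        then have e1: "1 + exp y \<le> 1 + exp u" "exp y \<le> 1 + exp u" by (linarith, smt (verit) exp_gt_zero)
        then have "b y \<le> cmod (fd y) * (1 + exp u) + cmod (f y) * (1 + exp u)"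
          unfolding b_def by (intro add_mono mult_left_mono) auto
        then show ?thesis using True by (simp add: hh_def algebra_simps)
      qed (simp add: hh_nonneg)
      moreover have "0 \<le> indicator {a..u} y * b y" by (simp add: b_def)
      ultimately show "norm (indicator {a..u} y *\<^sub>R b y) \<le> norm ((1 + exp u) * hh y)"
        using hh_nonneg[of y] by (simp add: abs_mult)
    qed
  qed
  have S2eq: "S2 = integral {a..u} (\<lambda>y. f y * E y)"
    using set_borel_integral_eq_integral(2)[of "{a..u}" "\<lambda>y. f y * E y"] i2
    unfolding S2_def set_integrable_def set_lebesgue_integral_def by simp
  have bHK: "b integrable_on {a..u}" using set_borel_integral_eq_integral(1)[OF bint] .
  have bval: "integral {a..u} b \<le> (LINT y|lborel. cmod (fd y)) + Hint k"
  proof -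
    have "integral {a..u} b = (LINT y|lborel. indicator {a..u} y *\<^sub>R b y)"
      using set_borel_integral_eq_integral(2)[OF bint] unfolding set_lebesgue_integral_def by simp
    also have "\<dots> \<le> (LINT y|lborel. cmod (fd y) + indicator {..u} y * (hh y * exp y))"
    proof (rule integral_mono)
      show "integrable lborel (\<lambda>y. indicator {a..u} y *\<^sub>R b y)" using bint unfolding set_integrable_def .
      show "integrable lborel (\<lambda>y. cmod (fd y) + indicator {..u} y * (hh y * exp y))"
        using int_df Hint_int[of u] by auto
      fix y show "indicator {a..u} y *\<^sub>R b y \<le> cmod (fd y) + indicator {..u} y * (hh y * exp y)"
        by (cases "y \<in> {a..u}") (auto simp: indicator_def b_def hh_def algebra_simps)
    qed
    also have "\<dots> = (LINT y|lborel. cmod (fd y)) + Hint k"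
      unfolding Hint_def u_def using int_df Hint_int[of "ln k"] by simp
    finally show ?thesis .
  qed
  have fu: "cmod (f u) * (1 + exp u) / k \<le> 2 * C * u powr (- gR)"
  proof -
    have "cmod (f u) \<le> C / u powr (1 + \<alpha>)" using decay_right uL by simp
    also have "\<dots> \<le> C / u powr gR" using C_pos u1 gR by (intro divide_left_mono powr_mono) auto
    also have "\<dots> = C * u powr (- gR)" by (simp add: powr_minus divide_inverse)
    finally have 1: "cmod (f u) \<le> C * u powr (- gR)" .
    have "(1 + exp u) / k \<le> 2" using k1 eu by (simp add: divide_le_eq)
    then have "cmod (f u) * ((1 + exp u) / k) \<le> C * u powr (- gR) * 2"
    proof (rule mult_mono[OF 1])
      show "0 \<le> C * u powr - gR" using C_pos by simp
      show "0 \<le> (1 + exp u) / k" using k1 by (smt (verit) exp_gt_zero divide_nonneg_pos)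
    qed
    then show ?thesis by (simp add: mult_ac)
  qed
  have fa: "cmod (f a) * (1 + exp a) / k \<le> 2 * C * k powr (- g0)"
  proof -
    have "cmod (f a) \<le> C / (- a) powr (1 + \<epsilon>)" using decay_left[of "-k"] kL unfolding a_def by simp
    also have "\<dots> \<le> C / 1" using C_pos k1 eps_pos unfolding a_def by (intro divide_left_mono ge_one_powr_ge_zero) auto
    finally have 1: "cmod (f a) \<le> C" by simp
    have "1 + exp a \<le> 2" unfolding a_def using k1 by simp
    have "cmod (f a) * (1 + exp a) \<le> C * 2"
      using 1 \<open>1 + exp a \<le> 2\<close> C_pos by (intro mult_mono) (auto simp: add_nonneg_nonneg)
    then have 2: "cmod (f a) * (1 + exp a) \<le> 2 * C" by simp
    have "1 / k \<le> k powr (- g0)"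
    proof -
      have "k powr (-1) \<le> k powr (- g0)" using k1 g0 by (intro powr_mono) auto
      then show ?thesis using k1 by (simp add: powr_minus divide_inverse)
    qed
    then have "cmod (f a) * (1 + exp a) * (1 / k) \<le> 2 * C * k powr (- g0)"
      using mult_mono[OF 2 \<open>1 / k \<le> k powr (- g0)\<close>] C_pos k1 by simp
    then show ?thesis by simp
  qed
  have ND: "(LINT y|lborel. cmod (fd y)) / k \<le> (LINT y|lborel. cmod (fd y)) * k powr (- g0)"
  proof -
    have "k powr (-1) \<le> k powr (- g0)" using k1 g0 by (intro powr_mono) auto
    then have "1 / k \<le> k powr (- g0)" using k1 by (simp add: powr_minus divide_inverse)
    moreover have "0 \<le> (LINT y|lborel. cmod (fd y))" by (intro integral_nonneg_AE) auto
    ultimately have "(LINT y|lborel. cmod (fd y)) * (1 / k) \<le> (LINT y|lborel. cmod (fd y)) * k powr (- g0)"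
      by (intro mult_left_mono)
    then show ?thesis by simp
  qed
  have S2b: "cmod S2 \<le> 2 * C * u powr (- gR) + 2 * C * k powr (- g0) + (LINT y|lborel. cmod (fd y)) * k powr (- g0) + Hint k / k"
  proof -
    have "cmod S2 \<le> (cmod (f u) * (1 + exp u) + cmod (f a) * (1 + exp a) + integral {a..u} b) / k"
      unfolding S2eq E_def using ibp[OF au _ bHK[unfolded b_def[abs_def]]] k1 by (simp add: b_def[abs_def])
    also have "\<dots> \<le> (cmod (f u) * (1 + exp u) + cmod (f a) * (1 + exp a) + ((LINT y|lborel. cmod (fd y)) + Hint k)) / k"
      using bval k1 by (intro divide_right_mono add_left_mono) auto
    also have "\<dots> = cmod (f u) * (1 + exp u) / k + cmod (f a) * (1 + exp a) / k + (LINT y|lborel. cmod (fd y)) / k + Hint k / k"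
      by (simp add: add_divide_distrib)
    also have "\<dots> \<le> 2 * C * u powr (- gR) + 2 * C * k powr (- g0) + (LINT y|lborel. cmod (fd y)) * k powr (- g0) + Hint k / k"
      using fu fa ND by linarith
    finally show ?thesis .
  qed
  have "cmod (LINT y|lborel. f y * cis (k * xmap y)) \<le> cmod S1 + cmod S2 + cmod S3"
  proof -
    have "cmod (S1 + S2 + S3) \<le> cmod S1 + cmod S2 + cmod S3"
      using norm_triangle_ineq[of "S1+S2" S3] norm_triangle_ineq[of S1 S2] by linarith
    then show ?thesis using S unfolding E_def by simp
  qed
  also have "\<dots> \<le> (LINT y|lborel. Wf g0 y) * k powr (- g0)
      + (2 * C * u powr (- gR) + 2 * C * k powr (- g0) + (LINT y|lborel. cmod (fd y)) * k powr (- g0) + Hint k / k)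
      + MR * u powr (- gR)"
    using S1b S2b S3b by (intro add_mono) auto
  finally have X: "cmod (LINT y|lborel. f y * cis (k * xmap y)) \<le> (LINT y|lborel. Wf g0 y) * k powr (- g0)
      + (2 * C * u powr (- gR) + 2 * C * k powr (- g0) + (LINT y|lborel. cmod (fd y)) * k powr (- g0) + Hint k / k)
      + MR * u powr (- gR)" .
  show ?thesis using X unfolding MR_def u_def by (simp only: distrib_right)
qed

end



lemma powr_0_c_nn:
  fixes s c :: real assumes "s > -1" "c \<ge> 0"
  shows "(\<integral>\<^sup>+p. ennreal (indicator {0..c} p * p powr s) \<partial>lborel) = ennreal (c powr (s+1) / (s+1))"
proof -
  have "((\<lambda>p. p powr s) has_integral (c powr (s+1) / (s+1))) {0..c}"
    using has_integral_powr_from_0[OF assms] by simp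
  moreover have "(\<lambda>y. indicator {0..c} y * y powr s) = (\<lambda>y. if y \<in> {0..c} then y powr s else 0)"
    by (auto simp: indicator_def fun_eq_iff)
  ultimately have "((\<lambda>y. indicator {0..c} y * y powr s) has_integral (c powr (s+1) / (s+1))) UNIV"
    by (simp only: has_integral_restrict_UNIV)
  from nn_integral_has_integral_lborel[OF _ _ this] show ?thesis
    by (auto simp: indicator_def)
qed

lemma ln_powr_tail_nn:
  fixes e K :: real assumes e: "e > 1" and K: "K > 1"
  shows "(\<integral>\<^sup>+x. ennreal (ln x powr (- e) / x) * indicator {K..} x \<partial>lborel) = ennreal (ln K powr (1 - e) / (e - 1))"
proof -
  define F where "F x = ln x powr (1 - e) / (1 - e)" for x :: real
  have "(\<integral>\<^sup>+x. ennreal (ln x powr (- e) / x) * indicator {K..} x \<partial>lborel) = 0 - F K"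
  proof (rule nn_integral_FTC_atLeast)
    show "(\<lambda>x. ln x powr (- e) / x) \<in> borel_measurable borel" by measurable
    fix x assume x: "K \<le> x"
    then have x1: "x > 1" using K by linarith
    then have lx: "ln x > 0" by simp
    show "0 \<le> ln x powr (- e) / x" using x1 by simp
    have "((\<lambda>x. ln x powr (1 - e)) has_real_derivative (1 - e) * ln x powr (1 - e - 1) * (1 / x)) (at x)"
      using DERIV_fun_powr[of ln "1/x" x "1 - e", OF DERIV_ln_divide] x1 lx by simp
    from DERIV_cdivide[OF this, of "1 - e"]
    have "(F has_real_derivative ((1 - e) * ln x powr (1 - e - 1) * (1 / x)) / (1 - e)) (at x)"
      unfolding F_def[abs_def] .
    moreover have "((1 - e) * ln x powr (1 - e - 1) * (1 / x)) / (1 - e) = ln x powr (- e) / x"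
      using e by simp
    ultimately show "(F has_real_derivative ln x powr (- e) / x) (at x)" by simp
  next
    have "((\<lambda>x. ln x powr (1 - e)) \<longlongrightarrow> 0) at_top"
      using e by (intro tendsto_neg_powr ln_at_top) auto
    then have "((\<lambda>x. ln x powr (1 - e) / (1 - e)) \<longlongrightarrow> 0 / (1 - e)) at_top"
      by (intro tendsto_divide) (use e in auto)
    then show "(F \<longlongrightarrow> 0) at_top" by (simp add: F_def[abs_def])
  qed
  also have "0 - F K = ln K powr (1 - e) / (e - 1)"
    unfolding F_def by (simp add: minus_divide_right)
  finally show ?thesis .
qed

lemma sq3: "((x::real) + y + z)^2 \<le> 3 * (x^2 + y^2 + z^2)"
proof -
  have eq: "3 * (x^2 + y^2 + z^2) - (x + y + z)^2 = (x-y)^2 + (y-z)^2 + (x-z)^2"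
    by (simp add: power2_eq_square algebra_simps)
  have "0 \<le> (x-y)^2 + (y-z)^2 + (x-z)^2" by simp
  then show ?thesis using eq by linarith
qed


context fsetting2 begin

lemma Hint_if: "Hint k = (LINT y|lborel. (if y \<le> ln k then hh y * exp y else 0))"
  unfolding Hint_def by (intro Bochner_Integration.integral_cong) (auto simp: indicator_def)

lemma Hint_meas[measurable]: "Hint \<in> borel_measurable borel"
proof -
  have "(\<lambda>k. LINT y|lborel. (if y \<le> ln k then hh y * exp y else 0)) \<in> borel_measurable borel"
    by measurable
  then show ?thesis by (simp add: Hint_if[abs_def])
qed

lemma Hint_nonneg: "0 \<le> Hint k"
  unfolding Hint_def by (intro integral_nonneg_AE) (auto simp: hh_nonneg)

lemma Hint_le: assumes "k > 0" shows "Hint k \<le> k * (LINT y|lborel. hh y)"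
proof -
  have "Hint k \<le> (LINT y|lborel. k * hh y)"
    unfolding Hint_def
  proof (rule integral_mono)
    show "integrable lborel (\<lambda>y. indicator {..ln k} y * (hh y * exp y))" by (rule Hint_int)
    show "integrable lborel (\<lambda>y. k * hh y)" using hh_int by auto
    fix y show "indicator {..ln k} y * (hh y * exp y) \<le> k * hh y"
    proof (cases "y \<le> ln k")
      case True
      then have "exp y \<le> k" using assms by (metis exp_le_cancel_iff exp_ln)
      then have "hh y * exp y \<le> hh y * k" using hh_nonneg[of y] by (rule mult_left_mono)
      then show ?thesis using True by (simp add: mult.commute)
    qed (use hh_nonneg[of y] assms in simp)
  qed
  then show ?thesis by simp
qed

lemma J3:
  assumes K0: "K0 > 0"
  shows "(\<integral>\<^sup>+ k. ennreal (indicator {K0..} k * (Hint k / k^2)) \<partial>lborel) < \<infinity>"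
proof -
  define \<Phi> where "\<Phi> k y = ennreal (if K0 \<le> k \<and> y \<le> ln k then hh y * exp y / k^2 else 0)" for k y
  have [measurable]: "case_prod \<Phi> \<in> borel_measurable (lborel \<Otimes>\<^sub>M lborel)"
    unfolding \<Phi>_def[abs_def] by measurable
  have pt: "ennreal (indicator {K0..} k * (Hint k / k^2)) = (\<integral>\<^sup>+ y. \<Phi> k y \<partial>lborel)" for k
  proof -
    have "indicator {K0..} k * (Hint k / k^2) = (LINT y|lborel. (indicator {K0..} k / k^2) * (indicator {..ln k} y * (hh y * exp y)))"
      unfolding Hint_def by simp
    also have "\<dots> = (LINT y|lborel. (if K0 \<le> k \<and> y \<le> ln k then hh y * exp y / k^2 else 0))"
      by (intro Bochner_Integration.integral_cong) (auto simp: indicator_def)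
    finally have eq: "indicator {K0..} k * (Hint k / k^2) = (LINT y|lborel. (if K0 \<le> k \<and> y \<le> ln k then hh y * exp y / k^2 else 0))" .
    have int: "integrable lborel (\<lambda>y. (if K0 \<le> k \<and> y \<le> ln k then hh y * exp y / k^2 else 0))"
    proof -
      have "integrable lborel (\<lambda>y. (indicator {K0..} k / k^2) * (indicator {..ln k} y * (hh y * exp y)))"
        using Hint_int by auto
      also have "(\<lambda>y. (indicator {K0..} k / k^2) * (indicator {..ln k} y * (hh y * exp y)))
          = (\<lambda>y. (if K0 \<le> k \<and> y \<le> ln k then hh y * exp y / k^2 else 0))"
        by (auto simp: indicator_def fun_eq_iff)
      finally show ?thesis .
    qed
    show ?thesis unfolding eq \<Phi>_def
      by (rule nn_integral_eq_integral[symmetric, OF int]) (auto simp: hh_nonneg)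
  qed
  have inner: "(\<integral>\<^sup>+ k. \<Phi> k y \<partial>lborel) \<le> ennreal (hh y)" for y
  proof -
    define m where "m = max K0 (exp y)"
    have m0: "m > 0" using K0 by (simp add: m_def)
    have "(\<integral>\<^sup>+ k. \<Phi> k y \<partial>lborel) \<le> (\<integral>\<^sup>+ k. ennreal (hh y * m) * ennreal (indicator {m..} k * k powr (-2)) \<partial>lborel)"
    proof (rule nn_integral_mono)
      fix k
      show "\<Phi> k y \<le> ennreal (hh y * m) * ennreal (indicator {m..} k * k powr (-2))"
      proof (cases "K0 \<le> k \<and> y \<le> ln k")
        case True
        then have k0: "k > 0" using K0 by linarith
        have ey: "exp y \<le> k" using True k0 by (metis exp_le_cancel_iff exp_ln)
        then have mk: "m \<le> k" using True by (simp add: m_def)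
        have "hh y * exp y / k^2 \<le> hh y * m / k^2"
          using hh_nonneg[of y] k0 by (intro divide_right_mono mult_left_mono) (auto simp: m_def)
        also have "\<dots> = hh y * m * k powr (-2)"
          using k0 by (simp add: powr_minus powr_realpow divide_inverse)
        finally show ?thesis using True mk unfolding \<Phi>_def
          by (simp add: ennreal_mult'[symmetric] indicator_def hh_nonneg m0 less_imp_le)
      next
        case False then show ?thesis by (auto simp: \<Phi>_def)
      qed
    qed
    also have "\<dots> = ennreal (hh y * m) * (\<integral>\<^sup>+ k. ennreal (indicator {m..} k * k powr (-2)) \<partial>lborel)"
      by (rule nn_integral_cmult) measurable
    also have "\<dots> = ennreal (hh y * m) * ennreal (m powr (-1))"
      using powr_tail_nn[of "-2" m] m0 by simp
    also have "\<dots> = ennreal (hh y)"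
    proof -
      have "hh y * m * m powr (-1) = hh y" using m0 by (simp add: powr_minus)
      then show ?thesis by (simp add: ennreal_mult'[symmetric] hh_nonneg m0 less_imp_le)
    qed
    finally show ?thesis .
  qed
  have "(\<integral>\<^sup>+ k. ennreal (indicator {K0..} k * (Hint k / k^2)) \<partial>lborel) = (\<integral>\<^sup>+ k. (\<integral>\<^sup>+ y. \<Phi> k y \<partial>lborel) \<partial>lborel)"
    using pt by (intro nn_integral_cong) blast
  also have "\<dots> = (\<integral>\<^sup>+ y. (\<integral>\<^sup>+ k. \<Phi> k y \<partial>lborel) \<partial>lborel)"
    by (rule lborel_pair.Fubini'[symmetric]) measurable
  also have "\<dots> \<le> (\<integral>\<^sup>+ y. ennreal (hh y) \<partial>lborel)"
    by (intro nn_integral_mono inner)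
  also have "\<dots> = ennreal (LINT y|lborel. hh y)"
    by (rule nn_integral_eq_integral[OF hh_int]) (auto simp: hh_nonneg)
  also have "\<dots> < \<infinity>" by simp
  finally show ?thesis .
qed

end


context fsetting2 begin

lemma powr_sq: "(x::real) > 0 \<Longrightarrow> (x powr a)^2 = x powr (2*a)"
  by (simp add: power2_eq_square powr_add[symmetric])

lemma Nbar_fin:
  assumes C_pos: "C > 0" and a: "\<alpha> > 1/2"
    and pos_freq: "\<And>p. p < 0 \<Longrightarrow> fourier f p = 0"
  shows "Nbar f < \<infinity>"
proof -
  define c where "c = 1 / sqrt (2*pi)"
  define K0 where "K0 = exp L"
  have c0: "c > 0" by (simp add: c_def)
  have K1: "K0 > 1" unfolding K0_def using L_gt by simp
  have gR: "1/2 < gR" "gR \<le> 1" "gR < \<alpha>" using a by (auto simp: gR_def)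
  note g0 = g0
  define MW where "MW = (LINT y|lborel. Wf g0 y)"
  define MR where "MR = (LINT y|lborel. indicator {0..} y * (cmod (f y) * (1+y) powr gR))"
  define ND where "ND = (LINT y|lborel. cmod (fd y))"
  define MH where "MH = (LINT y|lborel. hh y)"
  have MW0: "MW \<ge> 0" unfolding MW_def by (intro integral_nonneg_AE) (auto simp: Wf_nonneg)
  have MR0: "MR \<ge> 0" unfolding MR_def by (intro integral_nonneg_AE) (auto simp: indicator_def)
  have ND0: "ND \<ge> 0" unfolding ND_def by (intro integral_nonneg_AE) auto
  have MH0: "MH \<ge> 0" unfolding MH_def by (intro integral_nonneg_AE) (auto simp: hh_nonneg)
  define P where "P = MR + 2 * C"
  define Q where "Q = MW + 2 * C + ND"
  have P0: "P \<ge> 0" "Q \<ge> 0" using MR0 MW0 ND0 C_pos by (auto simp: P_def Q_def)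
  define A0 where "A0 = (c * MW)^2 / 2"
  define A1 where "A1 = 3 * (c * P)^2 / 2"
  define A2 where "A2 = 3 * (c * Q)^2 / 2"
  define A3 where "A3 = 3 * c^2 * MH / 2"
  define t0 where "t0 k = indicator {0..K0} k * k powr (2*g0 - 1)" for k
  define t1 where "t1 k = indicator {K0..} k * (ln k powr (- (2*gR)) / k)" for k
  define t2 where "t2 k = indicator {K0..} k * k powr (- 2*g0 - 1)" for k
  define t3 where "t3 k = indicator {K0..} k * (Hint k / k^2)" for k
  have tnn: "0 \<le> t0 k" "0 \<le> t1 k" "0 \<le> t2 k" "0 \<le> t3 k" for k
    using K1 by (auto simp: t0_def t1_def t2_def t3_def indicator_def Hint_nonneg)
  have Ann: "0 \<le> A0" "0 \<le> A1" "0 \<le> A2" "0 \<le> A3" using MH0 by (auto simp: A0_def A1_def A2_def A3_def)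
  have key: "cmod (check_fourier_neg f k)^2 / (2*k) * indicator {0<..} k \<le> A0 * t0 k + A1 * t1 k + A2 * t2 k + A3 * t3 k" for k
  proof (cases "k > 0")
    case False
    then show ?thesis using tnn[of k] Ann by (simp add: indicator_def)
  next
    case k0: True
    show ?thesis
    proof (cases "k < K0")
      case True
      have "cmod (check_fourier_neg f k) \<le> c * MW * k powr g0"
        using check_small[OF pos_freq, of g0 k] g0 k0 by (simp add: c_def MW_def)
      from sq_bound[OF k0 _ _ this] have "cmod (check_fourier_neg f k)^2 \<le> (c * MW)^2 * k powr (2*g0)"
        using c0 MW0 by simp
      then have "cmod (check_fourier_neg f k)^2 / (2*k) \<le> (c * MW)^2 * k powr (2*g0) / (2*k)"
        using k0 by (intro divide_right_mono) auto
      also have "\<dots> = A0 * (k powr (2*g0) / k)" by (simp add: A0_def)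
      also have "k powr (2*g0) / k = k powr (2*g0 - 1)" using k0 by (simp add: powr_diff)
      finally have "cmod (check_fourier_neg f k)^2 / (2*k) \<le> A0 * t0 k"
        using True k0 by (simp add: t0_def indicator_def)
      then show ?thesis using tnn[of k] Ann k0 by (simp add: indicator_def add_increasing2 mult_nonneg_nonneg)
    next
      case False
      then have kK: "k \<ge> K0" by simp
      have k1: "k > 1" using kK K1 by simp
      have lk: "ln k > 0" using k1 by simp
      define x where "x = c * P * ln k powr (- gR)"
      define y where "y = c * Q * k powr (- g0)"
      define z where "z = c * (Hint k / k)"
      have xyz: "0 \<le> x" "0 \<le> y" "0 \<le> z" using c0 P0 k0 Hint_nonneg[of k] by (auto simp: x_def y_def z_def)
      have "cmod (check_fourier_neg f k) = c * cmod (LINT y|lborel. f y * cis (k * xmap y))"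
        by (simp add: check_fourier_neg_def c_def norm_mult norm_divide)
      also have "\<dots> \<le> c * (P * ln k powr (- gR) + Q * k powr (- g0) + Hint k / k)"
        using large_bound[OF C_pos a kK[unfolded K0_def]] c0
        unfolding P_def Q_def MR_def MW_def ND_def by (intro mult_left_mono) (auto simp: algebra_simps)
      also have "\<dots> = x + y + z" by (simp add: x_def y_def z_def algebra_simps)
      finally have le: "cmod (check_fourier_neg f k) \<le> x + y + z" .
      have "cmod (check_fourier_neg f k)^2 \<le> (x + y + z)^2"
        using le by (intro power_mono) auto
      also have "\<dots> \<le> 3 * (x^2 + y^2 + z^2)" by (rule sq3)
      finally have sq: "cmod (check_fourier_neg f k)^2 \<le> 3 * (x^2 + y^2 + z^2)" .
      have x2: "x^2 / (2*k) * 3 = A1 * t1 k"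
        using kK k0 lk by (simp add: x_def A1_def t1_def power_mult_distrib powr_sq indicator_def)
      have y2: "y^2 / (2*k) * 3 = A2 * t2 k"
      proof -
        have "(k powr (- g0))^2 / k = k powr (- 2*g0 - 1)"
          using k0 by (simp add: powr_sq powr_diff)
        moreover have "y^2 / (2*k) * 3 = A2 * ((k powr (- g0))^2 / k)"
          unfolding y_def A2_def using k0 by (simp add: power_mult_distrib field_simps)
        moreover have "t2 k = k powr (- 2*g0 - 1)" using kK by (simp add: t2_def indicator_def)
        ultimately show ?thesis by simp
      qed
      have z2: "z^2 / (2*k) * 3 \<le> A3 * t3 k"
      proof -
        have hk: "Hint k / k \<le> MH" using Hint_le[OF k0] k0 by (simp add: MH_def divide_le_eq mult.commute)
        have "z^2 = c^2 * ((Hint k / k) * (Hint k / k))" by (simp add: z_def power2_eq_square)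
        also have "\<dots> \<le> c^2 * (MH * (Hint k / k))"
          using hk Hint_nonneg[of k] k0 by (intro mult_left_mono mult_right_mono) auto
        finally have "z^2 / (2*k) * 3 \<le> c^2 * (MH * (Hint k / k)) / (2*k) * 3"
          using k0 by (intro mult_right_mono divide_right_mono) auto
        also have "\<dots> = A3 * t3 k" using kK k0
          by (simp add: A3_def t3_def indicator_def power2_eq_square)
        finally show ?thesis .
      qed
      have "cmod (check_fourier_neg f k)^2 / (2*k) \<le> 3 * (x^2 + y^2 + z^2) / (2*k)"
        using sq k0 by (intro divide_right_mono) auto
      also have "\<dots> = x^2 / (2*k) * 3 + y^2 / (2*k) * 3 + z^2 / (2*k) * 3" by (simp add: add_divide_distrib algebra_simps)
      also have "\<dots> \<le> A1 * t1 k + A2 * t2 k + A3 * t3 k" using x2 y2 z2 by linarith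
      finally have "cmod (check_fourier_neg f k)^2 / (2*k) \<le> A1 * t1 k + A2 * t2 k + A3 * t3 k" .
      moreover have "0 \<le> A0 * t0 k" using tnn[of k] Ann by simp
      ultimately show ?thesis using k0 by (simp add: indicator_def)
    qed
  qed
  have ekey: "ennreal (cmod (check_fourier_neg f k)^2 / (2*k)) * indicator {0<..} k
     \<le> ennreal A0 * ennreal (t0 k) + ennreal A1 * ennreal (t1 k) + ennreal A2 * ennreal (t2 k) + ennreal A3 * ennreal (t3 k)" for k
  proof -
    have "ennreal (cmod (check_fourier_neg f k)^2 / (2*k)) * indicator {0<..} k
        = ennreal (cmod (check_fourier_neg f k)^2 / (2*k) * indicator {0<..} k)"
      by (simp add: indicator_def)
    also have "\<dots> \<le> ennreal (A0 * t0 k + A1 * t1 k + A2 * t2 k + A3 * t3 k)"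
      by (rule ennreal_leI[OF key])
    also have "\<dots> = ennreal A0 * ennreal (t0 k) + ennreal A1 * ennreal (t1 k) + ennreal A2 * ennreal (t2 k) + ennreal A3 * ennreal (t3 k)"
      using tnn[of k] Ann by (simp add: ennreal_plus[symmetric] ennreal_mult[symmetric] add_nonneg_nonneg mult_nonneg_nonneg del: ennreal_plus)
    finally show ?thesis .
  qed
  have m0[measurable]: "t0 \<in> borel_measurable borel" unfolding t0_def[abs_def] by measurable
  have m1[measurable]: "t1 \<in> borel_measurable borel" unfolding t1_def[abs_def] by measurable
  have m2[measurable]: "t2 \<in> borel_measurable borel" unfolding t2_def[abs_def] by measurable
  have m3[measurable]: "t3 \<in> borel_measurable borel" unfolding t3_def[abs_def] by measurable
  have J0: "(\<integral>\<^sup>+k. ennreal (t0 k) \<partial>lborel) < \<infinity>"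
    unfolding t0_def using powr_0_c_nn[of "2*g0 - 1" K0] g0 K1 by simp
  have J1: "(\<integral>\<^sup>+k. ennreal (t1 k) \<partial>lborel) < \<infinity>"
  proof -
    have "(\<integral>\<^sup>+k. ennreal (t1 k) \<partial>lborel) = (\<integral>\<^sup>+x. ennreal (ln x powr (- (2*gR)) / x) * indicator {K0..} x \<partial>lborel)"
      by (intro nn_integral_cong) (simp add: t1_def indicator_def)
    also have "\<dots> = ennreal (ln K0 powr (1 - 2*gR) / (2*gR - 1))"
      using ln_powr_tail_nn[of "2*gR" K0] gR K1 by simp
    finally show ?thesis by simp
  qed
  have J2: "(\<integral>\<^sup>+k. ennreal (t2 k) \<partial>lborel) < \<infinity>"
    unfolding t2_def using powr_tail_nn[of "- 2*g0 - 1" K0] g0 K1 by simp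
  have J3: "(\<integral>\<^sup>+k. ennreal (t3 k) \<partial>lborel) < \<infinity>"
    unfolding t3_def using J3[of K0] K1 by simp
  have "Nbar f \<le> (\<integral>\<^sup>+k. ennreal A0 * ennreal (t0 k) + ennreal A1 * ennreal (t1 k) + ennreal A2 * ennreal (t2 k) + ennreal A3 * ennreal (t3 k) \<partial>lborel)"
    unfolding Nbar_def by (rule nn_integral_mono) (rule ekey)
  also have "\<dots> = ennreal A0 * (\<integral>\<^sup>+k. ennreal (t0 k) \<partial>lborel) + ennreal A1 * (\<integral>\<^sup>+k. ennreal (t1 k) \<partial>lborel)
       + ennreal A2 * (\<integral>\<^sup>+k. ennreal (t2 k) \<partial>lborel) + ennreal A3 * (\<integral>\<^sup>+k. ennreal (t3 k) \<partial>lborel)"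
    by (simp add: nn_integral_add nn_integral_cmult)
  also have "\<dots> < \<infinity>" using J0 J1 J2 J3 by (simp add: ennreal_mult_less_top)
  finally show ?thesis .
qed

end


theorem theorem2:
  fixes f :: "real \<Rightarrow> complex" and C L \<alpha> \<epsilon> :: real
  assumes pos_freq: "\<And>p. p < 0 \<Longrightarrow> fourier f p = 0"
    and normalised: "(\<integral>\<^sup>+ p \<in> {0<..}. ennreal (cmod (fourier f p) ^ 2 / (2 * p)) \<partial>lborel) = 1"
    and diff: "\<And>y. f differentiable (at y)"
    and int_f: "integrable lborel f"
    and int_df: "integrable lborel (\<lambda>y. vector_derivative f (at y))"
    and C_pos: "C > 0" and L_gt: "L > 1" and alpha_gt: "\<alpha> > 1/2" and eps_pos: "\<epsilon> > 0"
    and decay_left: "\<And>y. y \<le> - L \<Longrightarrow> cmod (f y) \<le> C / (- y) powr (1 + \<epsilon>)"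
    and decay_right: "\<And>y. y \<ge> L \<Longrightarrow> cmod (f y) \<le> C / y powr (1 + \<alpha>)"
  shows "Nbar f < \<infinity> \<and> (\<epsilon> > 1/2 \<longrightarrow> Nbar_th (2 * pi) f < \<infinity>)"
proof -
  interpret fsetting2 f C L \<alpha> \<epsilon>
  proof unfold_locales
    show "\<alpha> > 0" using alpha_gt by simp
  qed (use assms in auto)
  show ?thesis
    using Nbar_fin[OF C_pos alpha_gt pos_freq] thermal[OF pos_freq normalised alpha_gt] by auto
qed

end
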